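(* Assume the penalty $g$ satisfies A1–A3. Then for every $X=[x_1,\dots,x_n]\in\mathbb{R}^{m\times n}$ and $D\in\mathbb{R}^{m\times d}$, the constants $L_X(D)$, $C_X(D)$ defined with the norm $\|\cdot\|=\|\cdot\|_{1\to2}$ (and $C=1$) satisfy $$L_X(D)\le\frac1n\sum_{i=1}^n\sqrt{2f_{x_i}(D)}\,\bar g(f_{x_i}(D)),\qquad C_X(D)\le\frac1{2n}\sum_{i=1}^n\big[\bar g(f_{x_i}(D))\big]^2.$$
   Context: A penalty is a function $g:\mathbb{R}^d\to\mathbb{R}\cup\{+\infty\}$, not identically $+\infty$. A1: $g\ge0$; A2: $g$ lower semi-continuous; A3: $g(\alpha)\to+\infty$ as $\|\alpha\|\to\infty$. $\bar g(t)=\sup\{\|\alpha\|_1:\ g(\alpha)\le t\}$ ($\sup\emptyset=0$). $\mathcal{L}_x(D,\alpha)=\tfrac12\|x-D\alpha\|_2^2+g(\alpha)$, $f_x(D)=\inf_\alpha\mathcal{L}_x(D,\alpha)$. $\|\Delta\|_{1\to2}=\max_j\|\delta_j\|_2$, with dual norm $\|U\|_\star=\sup_{\|\Delta\|_{1\to2}\le1}\langle U,\Delta\rangle_F$. For $\epsilon>0$, $\mathfrak{A}_\epsilon(X,D)=\{A=[\alpha_1,\dots,\alpha_n]:\ \mathcal{L}_{x_i}(D,\alpha_i)\le f_{x_i}(D)+\epsilon\ \forall i\}$; $L_X(D)=\inf_{\epsilon>0}\sup_{A\in\mathfrak{A}_\epsilon(X,D)}\frac1n\|(X-DA)A^\top\|_\star$,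 $C_X(D)=\inf_{\epsilon>0}\sup_{A\in\mathfrak{A}_\epsilon(X,D)}\frac1{2n}\sum_i\|\alpha_i\|_1^2$. *)

theory Defs
  imports "HOL-Analysis.Analysis"
begin

definition lsc :: "('a::topological_space \<Rightarrow> ereal) \<Rightarrow> bool" where
  "lsc g \<longleftrightarrow> (\<forall>x. g x \<le> Liminf (at x) g)"

definition norm1 :: "real^'d \<Rightarrow> real" where
  "norm1 a = (\<Sum>j\<in>UNIV. \<bar>a $ j\<bar>)"

definition is_penalty :: "(real^'d \<Rightarrow> ereal) \<Rightarrow> bool" where
  "is_penalty g \<longleftrightarrow> (\<forall>a. g a \<noteq> -\<infinity>) \<and> (\<exists>a. g a \<noteq> \<infinity>)"

definition gbar :: "(real^'d \<Rightarrow> ereal) \<Rightarrow> ereal \<Rightarrow> ereal" where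
  "gbar g t = (if {a. g a \<le> t} = {} then 0 else (SUP a\<in>{a. g a \<le> t}. ereal (norm1 a)))"

definition Lx :: "(real^'d \<Rightarrow> ereal) \<Rightarrow> real^'m \<Rightarrow> real^'d^'m \<Rightarrow> real^'d \<Rightarrow> ereal" where
  "Lx g x D a = ereal ((1/2) * (norm (x - D *v a))\<^sup>2) + g a"

definition fx :: "(real^'d \<Rightarrow> ereal) \<Rightarrow> real^'m \<Rightarrow> real^'d^'m \<Rightarrow> ereal" where
  "fx g x D = (INF a. Lx g x D a)"

definition norm12 :: "real^'d^'m \<Rightarrow> real" where
  "norm12 Delta = Max (range (\<lambda>j. norm (column j Delta)))"

definition frob :: "real^'d^'m \<Rightarrow> real^'d^'m \<Rightarrow> real" where
  "frob U V = (\<Sum>i\<in>UNIV. \<Sum>j\<in>UNIV. U $ i $ j * V $ i $ j)"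

definition dualnorm12 :: "real^'d^'m \<Rightarrow> real" where
  "dualnorm12 U = (SUP Delta\<in>{Delta. norm12 Delta \<le> 1}. frob U Delta)"

definition Aeps :: "(real^'d \<Rightarrow> ereal) \<Rightarrow> real \<Rightarrow> real^'n^'m \<Rightarrow> real^'d^'m \<Rightarrow> (real^'n^'d) set" where
  "Aeps g eps X D = {A. \<forall>i. Lx g (column i X) D (column i A) \<le> fx g (column i X) D + ereal eps}"

definition LX :: "(real^'d \<Rightarrow> ereal) \<Rightarrow> real^'n^'m \<Rightarrow> real^'d^'m \<Rightarrow> ereal" where
  "LX g X D = (INF eps\<in>{0<..}. SUP A\<in>Aeps g eps X D.
     ereal (dualnorm12 ((X - D ** A) ** transpose A) / real CARD('n)))"

definition CX :: "(real^'d \<Rightarrow> ereal) \<Rightarrow> real^'n^'m \<Rightarrow> real^'d^'m \<Rightarrow> ereal" where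
  "CX g X D = (INF eps\<in>{0<..}. SUP A\<in>Aeps g eps X D.
     ereal ((\<Sum>i\<in>UNIV. (norm1 (column i A))\<^sup>2) / (2 * real CARD('n))))"

end

theory Submission
  imports Defs
begin



lemma norm1_nonneg: "0 \<le> norm1 a"
  unfolding norm1_def by (simp add: sum_nonneg)

lemma norm1_le: "norm1 (a::real^'d) \<le> real CARD('d) * norm a"
proof -
  have "norm1 a \<le> (\<Sum>j\<in>(UNIV::'d set). norm a)"
    unfolding norm1_def by (rule sum_mono) (rule component_le_norm_cart)
  then show ?thesis by simp
qed

lemma coercive:
  fixes g :: "real^'d \<Rightarrow> ereal"
  assumes A3: "filterlim g (nhds \<infinity>) at_infinity"
  shows "\<exists>R. \<forall>a. g a \<le> ereal t \<longrightarrow> norm a \<le> R"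
proof -
  have "eventually (\<lambda>a. ereal t < g a) at_infinity"
    using A3 unfolding order_tendsto_iff by simp
  then obtain b where "\<forall>x. b \<le> norm x \<longrightarrow> ereal t < g x"
    unfolding eventually_at_infinity by blast
  then have "\<forall>a. g a \<le> ereal t \<longrightarrow> norm a \<le> b"
  proof (intro allI impI)
    fix a assume b: "\<forall>x. b \<le> norm x \<longrightarrow> ereal t < g x" and ga: "g a \<le> ereal t"
    show "norm a \<le> b"
    proof (rule ccontr)
      assume "\<not> norm a \<le> b"
      then have "b \<le> norm a" by simp
      then have "ereal t < g a" using b by blast
      with ga show False by simp
    qed
  qed
  then show ?thesis by blast
qed

lemma gbar_nonneg: "0 \<le> gbar g t"
proof (cases "{a. g a \<le> t} = {}")
  case False
  then obtain a where "g a \<le> t" by auto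
  then have "ereal (norm1 a) \<le> (SUP a\<in>{a. g a \<le> t}. ereal (norm1 a))"
    by (intro SUP_upper) auto
  moreover have "0 \<le> ereal (norm1 a)" using norm1_nonneg by simp
  ultimately have "0 \<le> (SUP a\<in>{a. g a \<le> t}. ereal (norm1 a))" by (rule order.trans[rotated])
  then show ?thesis using False unfolding gbar_def by simp
qed (simp add: gbar_def)

lemma gbar_upper: "g a \<le> t \<Longrightarrow> ereal (norm1 a) \<le> gbar g t"
  unfolding gbar_def by (auto intro!: SUP_upper)

lemma gbar_mono: "t \<le> s \<Longrightarrow> gbar g t \<le> gbar g s"
proof (cases "{a. g a \<le> t} = {}")
  case True
  then show ?thesis using gbar_nonneg[of g s] by (simp add: gbar_def)
next
  case False
  assume ts: "t \<le> s"
  then have sub: "{a. g a \<le> t} \<subseteq> {a. g a \<le> s}" by (auto intro: order.trans)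
  with False have "{a. g a \<le> s} \<noteq> {}" by auto
  with False sub show ?thesis unfolding gbar_def by (auto intro!: SUP_subset_mono)
qed

lemma gbar_less: "ereal c < gbar g t \<Longrightarrow> 0 \<le> c \<Longrightarrow> \<exists>a. g a \<le> t \<and> c < norm1 a"
  unfolding gbar_def by (auto split: if_splits simp: less_SUP_iff)

lemma gbar_bounded:
  fixes g :: "real^'d \<Rightarrow> ereal"
  assumes A3: "filterlim g (nhds \<infinity>) at_infinity"
  shows "gbar g (ereal t) = ereal (real_of_ereal (gbar g (ereal t)))"
proof -
  obtain R0 where R0: "\<forall>a. g a \<le> ereal t \<longrightarrow> norm a \<le> R0" using coercive[OF A3] by blast
  define R where "R = max R0 0"
  have R: "\<forall>a. g a \<le> ereal t \<longrightarrow> norm a \<le> R" using R0 unfolding R_def by auto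
  have R0': "0 \<le> R" unfolding R_def by simp
  have "gbar g (ereal t) \<le> ereal (real CARD('d) * R)"
  proof (rule ccontr)
    assume "\<not> ?thesis"
    then have "ereal (real CARD('d) * R) < gbar g (ereal t)" by simp
    then obtain a where a: "g a \<le> ereal t" "real CARD('d) * R < norm1 a"
      using gbar_less R0' by (metis mult_nonneg_nonneg of_nat_0_le_iff)
    have "norm a \<le> R" using R a(1) by blast
    then have "real CARD('d) * norm a \<le> real CARD('d) * R" by (simp add: mult_left_mono)
    then have "norm1 a \<le> real CARD('d) * R" using norm1_le[of a] by linarith
    with a show False by simp
  qed
  moreover have "0 \<le> gbar g (ereal t)" by (rule gbar_nonneg)
  ultimately have "\<bar>gbar g (ereal t)\<bar> \<noteq> \<infinity>" by auto
  then show ?thesis by (simp add: ereal_real')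
qed




lemma tendsto_norm1: "(f \<longlongrightarrow> l) F \<Longrightarrow> ((\<lambda>x. norm1 (f x)) \<longlongrightarrow> norm1 l) F"
  unfolding norm1_def by (intro tendsto_intros)

lemma gbar_rc:
  fixes g :: "real^'d \<Rightarrow> ereal"
  assumes A2: "lsc g" and A3: "filterlim g (nhds \<infinity>) at_infinity" and dpos: "0 < \<delta>"
  shows "\<exists>e>0. gbar g (ereal (t+e)) \<le> gbar g (ereal t) + ereal \<delta>"
proof (rule ccontr)
  assume H: "\<not> ?thesis"
  define c where "c = real_of_ereal (gbar g (ereal t))"
  have gc: "gbar g (ereal t) = ereal c" unfolding c_def by (rule gbar_bounded[OF A3])
  have c0: "0 \<le> c" using gbar_nonneg[of g "ereal t"] gc by simp
  have "\<forall>k. \<exists>a. g a \<le> ereal (t + inverse (real (Suc k))) \<and> c + \<delta> < norm1 a"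
  proof
    fix k
    have "0 < inverse (real (Suc k))" by simp
    with H have "ereal (c + \<delta>) < gbar g (ereal (t + inverse (real (Suc k))))"
      using gc by (auto simp: not_le)
    then show "\<exists>a. g a \<le> ereal (t + inverse (real (Suc k))) \<and> c + \<delta> < norm1 a"
      using gbar_less c0 dpos by (metis add_nonneg_nonneg less_imp_le)
  qed
  then obtain a where a: "\<And>k. g (a k) \<le> ereal (t + inverse (real (Suc k)))"
      "\<And>k. c + \<delta> < norm1 (a k)" by metis
  obtain R where R: "\<forall>x. g x \<le> ereal (t+1) \<longrightarrow> norm x \<le> R" using coercive[OF A3] by blast
  have "\<forall>k. a k \<in> cball 0 R"
  proof
    fix k
    have "inverse (real (Suc k)) \<le> 1" by (simp add: inverse_le_1_iff)
    then have "ereal (t + inverse (real (Suc k))) \<le> ereal (t+1)" by simp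
    then have "g (a k) \<le> ereal (t+1)" using a(1)[of k] by (rule order.trans[rotated])
    then show "a k \<in> cball 0 R" using R by simp
  qed
  then obtain l r where lr: "strict_mono r" "(a \<circ> r) \<longlonglongrightarrow> l"
    using seq_compactE[OF compact_imp_seq_compact[OF compact_cball]] by metis
  have gl: "g l \<le> ereal t"
  proof (rule ccontr)
    assume "\<not> g l \<le> ereal t"
    then have "ereal t < g l" by simp
    then obtain t' where t': "ereal t < ereal t'" "ereal t' < g l" using ereal_dense2 by blast
    have "g l \<le> Liminf (at l) g" using A2 unfolding lsc_def by blast
    then have "eventually (\<lambda>x. ereal t' < g x) (at l)" using t'(2) le_Liminf_iff by blast
    then obtain S where S: "open S" "l \<in> S" "\<forall>x\<in>S. x \<noteq> l \<longrightarrow> ereal t' < g x"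
      unfolding eventually_at_topological by blast
    obtain N1 where N1: "\<forall>n\<ge>N1. (a \<circ> r) n \<in> S" using lr(2) S(1,2) unfolding lim_explicit by blast
    have "0 < t' - t" using t'(1) by simp
    then obtain N2 where N2: "inverse (real (Suc N2)) < t' - t" using reals_Archimedean by blast
    define n where "n = max N1 N2"
    have inS: "a (r n) \<in> S" using N1 unfolding n_def by auto
    have "N2 \<le> r n" using seq_suble[OF lr(1), of n] unfolding n_def by simp
    then have "inverse (real (Suc (r n))) \<le> inverse (real (Suc N2))"
      by (intro le_imp_inverse_le) auto
    then have "t + inverse (real (Suc (r n))) < t'" using N2 by linarith
    then have "ereal (t + inverse (real (Suc (r n)))) < ereal t'" by simp
    then have "g (a (r n)) < ereal t'" using a(1)[of "r n"] by (rule le_less_trans[rotated])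
    moreover have "a (r n) = l" using inS S(3) calculation by force
    ultimately show False using t'(2) by simp
  qed
  have "norm1 l \<le> c" using gbar_upper[of g l, OF gl] gc by simp
  moreover have "c + \<delta> \<le> norm1 l"
    using tendsto_norm1[OF lr(2)] a(2) by (intro LIMSEQ_le_const) (auto intro: less_imp_le)
  ultimately show False using dpos by simp
qed




lemma column_nth: "column i A $ j = A $ j $ i" by (simp add: column_def)

lemma sum3_swap: "(\<Sum>k\<in>K. \<Sum>j\<in>J. \<Sum>i\<in>I. f k j i) = (\<Sum>i\<in>I. \<Sum>j\<in>J. \<Sum>k\<in>K. (f k j i::real))"
proof -
  have "(\<Sum>k\<in>K. \<Sum>j\<in>J. \<Sum>i\<in>I. f k j i) = (\<Sum>k\<in>K. \<Sum>i\<in>I. \<Sum>j\<in>J. f k j i)"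
    by (rule sum.cong[OF refl], rule sum.swap)
  also have "\<dots> = (\<Sum>i\<in>I. \<Sum>k\<in>K. \<Sum>j\<in>J. f k j i)" by (rule sum.swap)
  also have "\<dots> = (\<Sum>i\<in>I. \<Sum>j\<in>J. \<Sum>k\<in>K. f k j i)"
    by (rule sum.cong[OF refl], rule sum.swap)
  finally show ?thesis .
qed

lemma frob_expand:
  fixes R :: "real^'n^'m" and A :: "real^'n^'d" and Delta :: "real^'d^'m"
  shows "frob (R ** transpose A) Delta = (\<Sum>i\<in>UNIV. \<Sum>j\<in>UNIV. A$j$i * (column i R \<bullet> column j Delta))"
proof -
  have "frob (R ** transpose A) Delta = (\<Sum>k\<in>UNIV. \<Sum>j\<in>UNIV. \<Sum>i\<in>UNIV. R$k$i * A$j$i * Delta$k$j)"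
    by (simp add: frob_def matrix_matrix_mult_def transpose_def sum_distrib_right)
  also have "\<dots> = (\<Sum>i\<in>UNIV. \<Sum>j\<in>UNIV. \<Sum>k\<in>UNIV. R$k$i * A$j$i * Delta$k$j)"
    by (rule sum3_swap)
  also have "\<dots> = (\<Sum>i\<in>UNIV. \<Sum>j\<in>UNIV. A$j$i * (column i R \<bullet> column j Delta))"
    by (simp add: inner_vec_def column_def sum_distrib_left mult_ac)
  finally show ?thesis .
qed

lemma dual_bound:
  fixes X :: "real^'n^'m" and D :: "real^'d^'m" and A :: "real^'n^'d"
  shows "dualnorm12 ((X - D ** A) ** transpose A)
     \<le> (\<Sum>i\<in>UNIV. norm (column i X - D *v column i A) * norm1 (column i A))"
  unfolding dualnorm12_def
proof (rule cSUP_least)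
  have "norm12 (0::real^'d^'m) = 0"
    unfolding norm12_def by (simp add: column_def zero_vec_def[symmetric])
  then have "(0::real^'d^'m) \<in> {Delta. norm12 Delta \<le> (1::real)}" by simp
  then show "{Delta::real^'d^'m. norm12 Delta \<le> 1} \<noteq> {}" by blast
next
  fix Delta :: "real^'d^'m" assume "Delta \<in> {Delta. norm12 Delta \<le> 1}"
  then have n1: "norm12 Delta \<le> 1" by simp
  have cj: "norm (column j Delta) \<le> 1" for j
  proof -
    have "norm (column j Delta) \<le> norm12 Delta" unfolding norm12_def by (rule Max_ge) (simp_all)
    with n1 show ?thesis by simp
  qed
  have col: "column i (X - D ** A) = column i X - D *v column i A" for i
    by (simp add: vec_eq_iff column_def matrix_matrix_mult_def matrix_vector_mult_def)
  have "frob ((X - D ** A) ** transpose A) Delta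
      = (\<Sum>i\<in>UNIV. \<Sum>j\<in>UNIV. A$j$i * (column i (X - D ** A) \<bullet> column j Delta))"
    by (rule frob_expand)
  also have "\<dots> \<le> (\<Sum>i\<in>UNIV. \<Sum>j\<in>UNIV. \<bar>A$j$i\<bar> * norm (column i (X - D ** A)))"
  proof (intro sum_mono)
    fix i j
    have "A$j$i * (column i (X - D ** A) \<bullet> column j Delta) \<le> \<bar>A$j$i\<bar> * \<bar>column i (X - D ** A) \<bullet> column j Delta\<bar>"
      by (metis abs_ge_self abs_mult)
    also have "\<dots> \<le> \<bar>A$j$i\<bar> * (norm (column i (X - D ** A)) * norm (column j Delta))"
      by (intro mult_left_mono Cauchy_Schwarz_ineq2) simp
    also have "\<dots> \<le> \<bar>A$j$i\<bar> * (norm (column i (X - D ** A)) * 1)"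
      by (intro mult_left_mono cj) simp_all
    finally show "A$j$i * (column i (X - D ** A) \<bullet> column j Delta) \<le> \<bar>A$j$i\<bar> * norm (column i (X - D ** A))"
      by simp
  qed
  also have "\<dots> = (\<Sum>i\<in>UNIV. norm (column i X - D *v column i A) * norm1 (column i A))"
    by (simp add: col norm1_def sum_distrib_left sum_distrib_right column_nth mult_ac)
  finally show "frob ((X - D ** A) ** transpose A) Delta
     \<le> (\<Sum>i\<in>UNIV. norm (column i X - D *v column i A) * norm1 (column i A))" .
qed

definition gr :: "(real^'d \<Rightarrow> ereal) \<Rightarrow> real \<Rightarrow> real" where
  "gr g t = real_of_ereal (gbar g (ereal t))"

lemma gr_eq:
  fixes g :: "real^'d \<Rightarrow> ereal"
  assumes A3: "filterlim g (nhds \<infinity>) at_infinity"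
  shows "gbar g (ereal t) = ereal (gr g t)"
  unfolding gr_def by (rule gbar_bounded[OF A3])

lemma gr_mono:
  fixes g :: "real^'d \<Rightarrow> ereal"
  assumes A3: "filterlim g (nhds \<infinity>) at_infinity" and "s \<le> t"
  shows "gr g s \<le> gr g t"
  using gbar_mono[of "ereal s" "ereal t" g] assms gr_eq[OF A3] by simp

lemma gr_tendsto:
  fixes g :: "real^'d \<Rightarrow> ereal"
  assumes A2: "lsc g" and A3: "filterlim g (nhds \<infinity>) at_infinity"
  shows "((\<lambda>e. gr g (t+e)) \<longlongrightarrow> gr g t) (at_right 0)"
  unfolding order_tendsto_iff
proof (intro conjI allI impI)
  fix a assume "a < gr g t"
  then show "eventually (\<lambda>e. a < gr g (t+e)) (at_right 0)"
    unfolding eventually_at_right_field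
  proof (intro exI[of _ 1] conjI allI impI)
    fix y :: real assume "0 < y"
    then have "gr g t \<le> gr g (t+y)" by (intro gr_mono[OF A3]) simp
    with \<open>a < gr g t\<close> show "a < gr g (t+y)" by simp
  qed simp
next
  fix b assume b: "gr g t < b"
  define \<delta> where "\<delta> = (b - gr g t)/2"
  have dpos: "0 < \<delta>" using b unfolding \<delta>_def by simp
  obtain e0 where e0: "0 < e0" "gbar g (ereal (t+e0)) \<le> gbar g (ereal t) + ereal \<delta>"
    using gbar_rc[OF A2 A3 dpos] by blast
  then have "gr g (t+e0) \<le> gr g t + \<delta>" using gr_eq[OF A3] by (metis plus_ereal.simps(1) ereal_less_eq(3))
  then have key: "gr g (t+e) < b" if "0 < e" "e < e0" for e
  proof -
    have "gr g (t+e) \<le> gr g (t+e0)" using that by (intro gr_mono[OF A3]) simp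
    also have "\<dots> \<le> gr g t + \<delta>" by fact
    also have "gr g t + \<delta> < b" using b unfolding \<delta>_def by (simp add: field_simps)
    finally show ?thesis .
  qed
  show "eventually (\<lambda>e. gr g (t+e) < b) (at_right 0)"
    unfolding eventually_at_right_field using key e0(1) by blast
qed




lemma Lx_nonneg:
  assumes A1: "\<forall>a. g a \<ge> 0"
  shows "0 \<le> Lx g x D a"
  unfolding Lx_def using A1 by (simp add: add_nonneg_nonneg)

lemma fx_fin:
  assumes P: "is_penalty g" and A1: "\<forall>a. g a \<ge> 0"
  shows "fx g x D = ereal (real_of_ereal (fx g x D)) \<and> 0 \<le> real_of_ereal (fx g x D)"
proof -
  have lo: "0 \<le> fx g x D" unfolding fx_def by (rule INF_greatest) (rule Lx_nonneg[OF A1])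
  obtain a0 where a0: "g a0 \<noteq> \<infinity>" using P unfolding is_penalty_def by blast
  have "fx g x D \<le> Lx g x D a0" unfolding fx_def by (rule INF_lower) simp
  also have "\<dots> < \<infinity>" unfolding Lx_def using a0 A1
    by (cases "g a0") auto
  finally have "fx g x D < \<infinity>" .
  with lo have "\<bar>fx g x D\<bar> \<noteq> \<infinity>" by auto
  then show ?thesis using lo by (simp add: ereal_real' real_of_ereal_pos)
qed

lemma Aeps_bounds:
  fixes g :: "real^'d \<Rightarrow> ereal" and X :: "real^'n^'m" and D :: "real^'d^'m"
  assumes A1: "\<forall>a. g a \<ge> 0"
    and A: "A \<in> Aeps g e X D"
    and F: "fx g (column i X) D = ereal f"
  shows "g (column i A) \<le> ereal (f + e)"
    and "norm (column i X - D *v column i A) \<le> sqrt (2 * (f + e))"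
proof -
  define q where "q = (1/2) * (norm (column i X - D *v column i A))\<^sup>2"
  have "Lx g (column i X) D (column i A) \<le> fx g (column i X) D + ereal e"
    using A unfolding Aeps_def by blast
  then have L: "ereal q + g (column i A) \<le> ereal (f + e)"
    unfolding F Lx_def q_def by simp
  have q0: "0 \<le> q" unfolding q_def by simp
  have "g (column i A) \<le> ereal q + g (column i A)"
    using q0 by (intro add_increasing) auto
  then show "g (column i A) \<le> ereal (f + e)" using L by (rule order.trans)
  have "ereal q \<le> ereal q + g (column i A)"
    using A1 by (intro add_increasing2) auto
  then have "ereal q \<le> ereal (f + e)" using L by (rule order.trans)
  then have "q \<le> f + e" by simp
  then have "(norm (column i X - D *v column i A))\<^sup>2 \<le> 2 * (f + e)" unfolding q_def by simp
  then have "sqrt ((norm (column i X - D *v column i A))\<^sup>2) \<le> sqrt (2 * (f + e))"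
    by (rule real_sqrt_le_mono)
  then show "norm (column i X - D *v column i A) \<le> sqrt (2 * (f + e))" by simp
qed




theorem mainTheorem6:
  fixes g :: "real^'d \<Rightarrow> ereal" and X :: "real^'n^'m" and D :: "real^'d^'m"
  assumes "is_penalty g"
    and A1: "\<forall>a. g a \<ge> 0"
    and A2: "lsc g"
    and A3: "filterlim g (nhds \<infinity>) at_infinity"
  shows "LX g X D \<le> ereal (1 / real CARD('n)) *
           (\<Sum>i\<in>UNIV. ereal (sqrt (2 * real_of_ereal (fx g (column i X) D))) * gbar g (fx g (column i X) D))
     \<and> CX g X D \<le> ereal (1 / (2 * real CARD('n))) *
           (\<Sum>i\<in>UNIV. (gbar g (fx g (column i X) D))\<^sup>2)"
proof -
  define f where "f = (\<lambda>i. real_of_ereal (fx g (column i X) D))"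
  have F: "fx g (column i X) D = ereal (f i)" and f0: "0 \<le> f i" for i
    using fx_fin[OF assms(1) A1, of "column i X" D] unfolding f_def by auto
  define N where "N = real CARD('n)"
  have N0: "0 < N" unfolding N_def by simp
  define H where "H = (\<lambda>e. (\<Sum>i\<in>UNIV. sqrt (2 * (f i + e)) * gr g (f i + e)) / N)"
  define K where "K = (\<lambda>e. (\<Sum>i\<in>UNIV. (gr g (f i + e))\<^sup>2) / (2 * N))"
  have n1: "norm1 (column i A) \<le> gr g (f i + e)" if "A \<in> Aeps g e X D" for A e i
  proof -
    have "ereal (norm1 (column i A)) \<le> gbar g (ereal (f i + e))"
      by (rule gbar_upper) (rule Aeps_bounds(1)[OF A1 that F])
    then show ?thesis using gr_eq[OF A3] by simp
  qed
  have LXb: "LX g X D \<le> ereal (H e)" if e0: "0 < e" for e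
  proof -
    have "LX g X D \<le> (SUP A\<in>Aeps g e X D. ereal (dualnorm12 ((X - D ** A) ** transpose A) / real CARD('n)))"
      unfolding LX_def by (rule INF_lower) (simp add: e0)
    also have "\<dots> \<le> ereal (H e)"
    proof (rule SUP_least)
      fix A assume A: "A \<in> Aeps g e X D"
      have "dualnorm12 ((X - D ** A) ** transpose A)
          \<le> (\<Sum>i\<in>UNIV. norm (column i X - D *v column i A) * norm1 (column i A))"
        by (rule dual_bound)
      also have "\<dots> \<le> (\<Sum>i\<in>UNIV. sqrt (2 * (f i + e)) * gr g (f i + e))"
      proof (rule sum_mono)
        fix i
        show "norm (column i X - D *v column i A) * norm1 (column i A) \<le> sqrt (2 * (f i + e)) * gr g (f i + e)"
          by (intro mult_mono Aeps_bounds(2)[OF A1 A F] n1[OF A] norm1_nonneg) (use f0[of i] e0 in simp_all)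
      qed
      finally have "dualnorm12 ((X - D ** A) ** transpose A) / N \<le> H e"
        unfolding H_def using N0 by (simp add: divide_right_mono)
      then show "ereal (dualnorm12 ((X - D ** A) ** transpose A) / real CARD('n)) \<le> ereal (H e)"
        unfolding N_def by simp
    qed
    finally show ?thesis .
  qed
  have CXb: "CX g X D \<le> ereal (K e)" if e0: "0 < e" for e
  proof -
    have "CX g X D \<le> (SUP A\<in>Aeps g e X D. ereal ((\<Sum>i\<in>UNIV. (norm1 (column i A))\<^sup>2) / (2 * real CARD('n))))"
      unfolding CX_def by (rule INF_lower) (simp add: e0)
    also have "\<dots> \<le> ereal (K e)"
    proof (rule SUP_least)
      fix A assume A: "A \<in> Aeps g e X D"
      have "(\<Sum>i\<in>UNIV. (norm1 (column i A))\<^sup>2) \<le> (\<Sum>i\<in>UNIV. (gr g (f i + e))\<^sup>2)"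
        by (intro sum_mono power_mono n1[OF A] norm1_nonneg)
      then have "(\<Sum>i\<in>UNIV. (norm1 (column i A))\<^sup>2) / (2 * N) \<le> K e"
        unfolding K_def using N0 by (simp add: divide_right_mono)
      then show "ereal ((\<Sum>i\<in>UNIV. (norm1 (column i A))\<^sup>2) / (2 * real CARD('n))) \<le> ereal (K e)"
        unfolding N_def by simp
    qed
    finally show ?thesis .
  qed
  have grt: "((\<lambda>e. gr g (f i + e)) \<longlongrightarrow> gr g (f i)) (at_right 0)" for i
    by (rule gr_tendsto[OF A2 A3])
  have id0: "((\<lambda>e::real. e) \<longlongrightarrow> 0) (at_right 0)" by (rule tendsto_ident_at)
  have Ht: "(H \<longlongrightarrow> (\<Sum>i\<in>UNIV. sqrt (2 * (f i + 0)) * gr g (f i)) / N) (at_right 0)"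
    unfolding H_def by (intro tendsto_intros grt id0) (use N0 in simp)
  have Kt: "(K \<longlongrightarrow> (\<Sum>i\<in>UNIV. (gr g (f i))\<^sup>2) / (2 * N)) (at_right 0)"
    unfolding K_def by (intro tendsto_intros grt) (use N0 in simp)
  have ev: "eventually (\<lambda>e::real. 0 < e) (at_right 0)"
    unfolding eventually_at_right_field by (intro exI[of _ 1]) simp
  have LX0: "LX g X D \<le> ereal ((\<Sum>i\<in>UNIV. sqrt (2 * (f i + 0)) * gr g (f i)) / N)"
  proof (rule tendsto_le[OF trivial_limit_at_right_real])
    show "((\<lambda>e. ereal (H e)) \<longlongrightarrow> ereal ((\<Sum>i\<in>UNIV. sqrt (2 * (f i + 0)) * gr g (f i)) / N)) (at_right 0)"
      by (rule tendsto_ereal[OF Ht])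
    show "((\<lambda>e. LX g X D) \<longlongrightarrow> LX g X D) (at_right 0)" by (rule tendsto_const)
    show "eventually (\<lambda>e. LX g X D \<le> ereal (H e)) (at_right 0)"
      using ev by eventually_elim (rule LXb)
  qed
  have CX0: "CX g X D \<le> ereal ((\<Sum>i\<in>UNIV. (gr g (f i))\<^sup>2) / (2 * N))"
  proof (rule tendsto_le[OF trivial_limit_at_right_real])
    show "((\<lambda>e. ereal (K e)) \<longlongrightarrow> ereal ((\<Sum>i\<in>UNIV. (gr g (f i))\<^sup>2) / (2 * N))) (at_right 0)"
      by (rule tendsto_ereal[OF Kt])
    show "((\<lambda>e. CX g X D) \<longlongrightarrow> CX g X D) (at_right 0)" by (rule tendsto_const)
    show "eventually (\<lambda>e. CX g X D \<le> ereal (K e)) (at_right 0)"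
      using ev by eventually_elim (rule CXb)
  qed
  have G: "gbar g (fx g (column i X) D) = ereal (gr g (f i))" for i
    unfolding F by (rule gr_eq[OF A3])
  have R1: "ereal (1 / real CARD('n)) *
           (\<Sum>i\<in>UNIV. ereal (sqrt (2 * real_of_ereal (fx g (column i X) D))) * gbar g (fx g (column i X) D))
       = ereal ((\<Sum>i\<in>UNIV. sqrt (2 * (f i + 0)) * gr g (f i)) / N)"
    unfolding F N_def by (simp add: sum_ereal gr_eq[OF A3])
  have R2: "ereal (1 / (2 * real CARD('n))) * (\<Sum>i\<in>UNIV. (gbar g (fx g (column i X) D))\<^sup>2)
       = ereal ((\<Sum>i\<in>UNIV. (gr g (f i))\<^sup>2) / (2 * N))"
    unfolding G N_def by (simp add: sum_ereal)
  show ?thesis using LX0 CX0 R1 R2 by simp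
qed


end
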